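(* Let $G_H$ be a finite undirected multigraph (parallel edges allowed, no self-loops) with vertex set $V$ and edge set partitioned as $E = S \sqcup S^c$ into secure edges $S$ and insecure edges $S^c$, and let $0 < p_J^{S^c} \le p_J^{S} \le p_I$ be real costs satisfying $p_J^{S^c} < p_I/2$ and $p_J^{S} + p_J^{S^c} \ge p_I$. Consider the following two problems. (II-A) Give weight $p_I - p_J^{S^c}$ to secure edges and $p_J^{S^c}$ to insecure edges, and find a cut $C^*$ of minimum weight among cuts $C$ with $n^S_C < |C|/2$; form the attack on $C^*$ that injects data into $n^S_{C^*}+1$ insecure edges of $C^*$ and jams all other insecure edges of $C^*$. (II-B) Give weight $p_J^{S}$ to secure edges and $p_I - p_J^{S}$ to insecure edges, and find a cut $C^*$ of minimum weight among cuts $C$ with $n^S_C \ge |C|/2$ and $n^{S^c}_C > 0$; form the attack on $C^*$ that injects data into all insecure edges of $C^*$ and jams $n^S_{C^*} + 1 - n^{S^c}_{C^*}$ secure edges of $C^*$. Then, among the attacks produced by those of the two problems that have a feasible solution, one of minimum cost is an optimal detectable generalized attack in $G_H$.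
   Context: For a nonempty proper subset $U \subsetneq V$, the cut $\delta(U)$ is the set of edges with exactly one endpoint in $U$; a cut of $G_H$ is any set of this form. For a cut $C$, $n^S_C = |C\cap S|$ and $n^{S^c}_C = |C \cap S^c|$. The costs are: $p_J^{S^c}$ per jammed insecure edge, $p_J^S$ per jammed secure edge, $p_I$ per insecure edge with injected data. A generalized attack is a triple $(C,J,I)$ where $C$ is a cut, $J \subseteq C$ is the set of jammed edges, and $I \subseteq (C \cap S^c)\setminus J$ is a nonempty set of injected edges; its cost is $p_J^{S}|J\cap S| + p_J^{S^c}|J \cap S^c| + p_I |I|$. The attack is detectable if $2|I| > |C \setminus J|$ (the injected edges form a strict majority of the non-jammed edges of the cut). An optimal detectable generalized attack is one of minimum cost among all detectable generalized attacks. *)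

theory Defs
  imports Complex_Main
begin

text \<open>Finite undirected multigraph: vertex set V, edge set E (edges are abstract
  objects, so parallel edges are allowed); each edge e has the two endpoints
  src e and tgt e (orientation irrelevant), no self-loops. S \<subseteq> E are the
  secure edges, E - S the insecure ones.\<close>

definition cut_of :: "'e set \<Rightarrow> ('e \<Rightarrow> 'v) \<Rightarrow> ('e \<Rightarrow> 'v) \<Rightarrow> 'v set \<Rightarrow> 'e set" where
  "cut_of E src tgt U = {e \<in> E. (src e \<in> U) \<noteq> (tgt e \<in> U)}"

definition is_cut :: "'v set \<Rightarrow> 'e set \<Rightarrow> ('e \<Rightarrow> 'v) \<Rightarrow> ('e \<Rightarrow> 'v) \<Rightarrow> 'e set \<Rightarrow> bool" where
  "is_cut V E src tgt C \<longleftrightarrow> (\<exists>U. U \<noteq> {} \<and> U \<subset> V \<and> C = cut_of E src tgt U)"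

definition gen_attack ::
  "'v set \<Rightarrow> 'e set \<Rightarrow> ('e \<Rightarrow> 'v) \<Rightarrow> ('e \<Rightarrow> 'v) \<Rightarrow> 'e set \<Rightarrow> 'e set \<Rightarrow> 'e set \<Rightarrow> 'e set \<Rightarrow> bool" where
  "gen_attack V E src tgt S C J I \<longleftrightarrow>
     is_cut V E src tgt C \<and> J \<subseteq> C \<and> I \<subseteq> (C \<inter> (E - S)) - J \<and> I \<noteq> {}"

definition attack_cost :: "'e set \<Rightarrow> 'e set \<Rightarrow> real \<Rightarrow> real \<Rightarrow> real \<Rightarrow> 'e set \<Rightarrow> 'e set \<Rightarrow> real" where
  "attack_cost E S pJS pJSc pI J I =
     pJS * real (card (J \<inter> S)) + pJSc * real (card (J \<inter> (E - S))) + pI * real (card I)"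

definition detectable :: "'e set \<Rightarrow> 'e set \<Rightarrow> 'e set \<Rightarrow> bool" where
  "detectable C J I \<longleftrightarrow> 2 * card I > card (C - J)"

definition optimal_detectable ::
  "'v set \<Rightarrow> 'e set \<Rightarrow> ('e \<Rightarrow> 'v) \<Rightarrow> ('e \<Rightarrow> 'v) \<Rightarrow> 'e set \<Rightarrow> real \<Rightarrow> real \<Rightarrow> real
    \<Rightarrow> 'e set \<Rightarrow> 'e set \<Rightarrow> 'e set \<Rightarrow> bool" where
  "optimal_detectable V E src tgt S pJS pJSc pI C J I \<longleftrightarrow>
     gen_attack V E src tgt S C J I \<and> detectable C J I \<and>
     (\<forall>C' J' I'. gen_attack V E src tgt S C' J' I' \<and> detectable C' J' I' \<longrightarrow>
        attack_cost E S pJS pJSc pI J I \<le> attack_cost E S pJS pJSc pI J' I')"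

definition weightA :: "'e set \<Rightarrow> 'e set \<Rightarrow> real \<Rightarrow> real \<Rightarrow> 'e set \<Rightarrow> real" where
  "weightA E S pJSc pI C =
     (pI - pJSc) * real (card (C \<inter> S)) + pJSc * real (card (C \<inter> (E - S)))"

definition feasA :: "'v set \<Rightarrow> 'e set \<Rightarrow> ('e \<Rightarrow> 'v) \<Rightarrow> ('e \<Rightarrow> 'v) \<Rightarrow> 'e set \<Rightarrow> 'e set \<Rightarrow> bool" where
  "feasA V E src tgt S C \<longleftrightarrow>
     is_cut V E src tgt C \<and> real (card (C \<inter> S)) < real (card C) / 2"

definition attackA ::
  "'v set \<Rightarrow> 'e set \<Rightarrow> ('e \<Rightarrow> 'v) \<Rightarrow> ('e \<Rightarrow> 'v) \<Rightarrow> 'e set \<Rightarrow> real \<Rightarrow> real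
    \<Rightarrow> 'e set \<Rightarrow> 'e set \<Rightarrow> 'e set \<Rightarrow> bool" where
  "attackA V E src tgt S pJSc pI C J I \<longleftrightarrow>
     feasA V E src tgt S C \<and>
     (\<forall>C'. feasA V E src tgt S C' \<longrightarrow> weightA E S pJSc pI C \<le> weightA E S pJSc pI C') \<and>
     I \<subseteq> C \<inter> (E - S) \<and> card I = card (C \<inter> S) + 1 \<and> J = (C \<inter> (E - S)) - I"

definition weightB :: "'e set \<Rightarrow> 'e set \<Rightarrow> real \<Rightarrow> real \<Rightarrow> 'e set \<Rightarrow> real" where
  "weightB E S pJS pI C =
     pJS * real (card (C \<inter> S)) + (pI - pJS) * real (card (C \<inter> (E - S)))"

definition feasB :: "'v set \<Rightarrow> 'e set \<Rightarrow> ('e \<Rightarrow> 'v) \<Rightarrow> ('e \<Rightarrow> 'v) \<Rightarrow> 'e set \<Rightarrow> 'e set \<Rightarrow> bool" where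
  "feasB V E src tgt S C \<longleftrightarrow>
     is_cut V E src tgt C \<and> real (card (C \<inter> S)) \<ge> real (card C) / 2 \<and>
     card (C \<inter> (E - S)) > 0"

definition attackB ::
  "'v set \<Rightarrow> 'e set \<Rightarrow> ('e \<Rightarrow> 'v) \<Rightarrow> ('e \<Rightarrow> 'v) \<Rightarrow> 'e set \<Rightarrow> real \<Rightarrow> real
    \<Rightarrow> 'e set \<Rightarrow> 'e set \<Rightarrow> 'e set \<Rightarrow> bool" where
  "attackB V E src tgt S pJS pI C J I \<longleftrightarrow>
     feasB V E src tgt S C \<and>
     (\<forall>C'. feasB V E src tgt S C' \<longrightarrow> weightB E S pJS pI C \<le> weightB E S pJS pI C') \<and>
     I = C \<inter> (E - S) \<and> J \<subseteq> C \<inter> S \<and>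
     card J = card (C \<inter> S) + 1 - card (C \<inter> (E - S))"

definition produced_attack ::
  "'v set \<Rightarrow> 'e set \<Rightarrow> ('e \<Rightarrow> 'v) \<Rightarrow> ('e \<Rightarrow> 'v) \<Rightarrow> 'e set \<Rightarrow> real \<Rightarrow> real \<Rightarrow> real
    \<Rightarrow> 'e set \<Rightarrow> 'e set \<Rightarrow> 'e set \<Rightarrow> bool" where
  "produced_attack V E src tgt S pJS pJSc pI C J I \<longleftrightarrow>
     attackA V E src tgt S pJSc pI C J I \<or> attackB V E src tgt S pJS pI C J I"

end

theory Submission
  imports Defs
begin

lemma cut_sub: "is_cut V E src tgt C \<Longrightarrow> C \<subseteq> E"
  unfolding is_cut_def cut_of_def by auto

lemma card_split:
  assumes "finite E" "S \<subseteq> E" "C \<subseteq> E"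
  shows "card C = card (C \<inter> S) + card (C \<inter> (E - S))"
proof -
  have "C = (C \<inter> S) \<union> (C \<inter> (E - S))" using assms by auto
  moreover have "finite C" using assms finite_subset by blast
  ultimately show ?thesis
    by (metis Diff_disjoint Int_Diff Int_absorb1 assms(3) card_Int_Diff finite_Int inf_commute)
qed

lemma attack_facts:
  assumes fin: "finite E" and SE: "S \<subseteq> E"
    and ga: "gen_attack V E src tgt S C J I" and det: "detectable C J I"
  shows "real (card (C \<inter> S)) + real (card (C \<inter> (E - S))) + 1
           \<le> 2 * real (card I) + real (card (J \<inter> S)) + real (card (J \<inter> (E - S)))"
    and "real (card I) + real (card (J \<inter> (E - S))) \<le> real (card (C \<inter> (E - S)))"
    and "card (C \<inter> (E - S)) > 0"
proof -
  have CE: "C \<subseteq> E" and JC: "J \<subseteq> C" and IC: "I \<subseteq> (C \<inter> (E - S)) - J" and In: "I \<noteq> {}"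
    using ga cut_sub[of V E src tgt C] unfolding gen_attack_def by auto
  have fC: "finite C" using CE fin finite_subset by blast
  have fJ: "finite J" using JC fC finite_subset by blast
  have c1: "card C = card (C \<inter> S) + card (C \<inter> (E - S))" using card_split[OF fin SE CE] .
  have c2: "card J = card (J \<inter> S) + card (J \<inter> (E - S))" using card_split[OF fin SE] JC CE by auto
  have c3: "card (C - J) = card C - card J" using card_Diff_subset[OF fJ JC] .
  have c4: "card J \<le> card C" using card_mono[OF fC JC] .
  from det have "2 * card I > card (C - J)" unfolding detectable_def .
  then show "real (card (C \<inter> S)) + real (card (C \<inter> (E - S))) + 1
           \<le> 2 * real (card I) + real (card (J \<inter> S)) + real (card (J \<inter> (E - S)))"
    using c1 c2 c3 c4 by linarith
  have "I \<union> (J \<inter> (E - S)) \<subseteq> C \<inter> (E - S)" using IC JC by auto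
  moreover have "I \<inter> (J \<inter> (E - S)) = {}" using IC by auto
  moreover have "finite (C \<inter> (E - S))" using fC by auto
  ultimately have "card I + card (J \<inter> (E - S)) \<le> card (C \<inter> (E - S))"
    by (metis card_Un_disjoint card_mono finite_subset le_sup_iff)
  then show "real (card I) + real (card (J \<inter> (E - S))) \<le> real (card (C \<inter> (E - S)))" by linarith
  have "finite (C \<inter> (E - S))" using fC by auto
  moreover have "I \<subseteq> C \<inter> (E - S)" using IC by auto
  ultimately show "card (C \<inter> (E - S)) > 0" using In
    by (metis card_gt_0_iff finite_subset subset_empty)
qed

lemma lbA:
  fixes s t js jt i pJS pJSc pI :: real
  assumes "s + t + 1 \<le> 2*i + js + jt" "i + jt \<le> t" "js \<ge> 0"
    "pJSc < pI / 2" "pJS + pJSc \<ge> pI" "pJSc > 0"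
  shows "(pI - pJSc) * s + pJSc * t + pI - pJSc \<le> pJS * js + pJSc * jt + pI * i"
proof -
  have a: "0 \<le> (pJS - pI + pJSc) * js" using assms by simp
  have b: "0 \<le> (pI - pJSc) * (2*i+js+jt-s-t-1)" using assms by simp
  have c: "0 \<le> (pI - 2*pJSc) * (t - i - jt)" using assms by simp
  have "pJS * js + pJSc * jt + pI * i - ((pI - pJSc) * s + pJSc * t + pI - pJSc)
    = (pJS - pI + pJSc) * js + (pI - pJSc) * (2*i+js+jt-s-t-1) + (pI - 2*pJSc) * (t - i - jt)"
    by (simp add: algebra_simps)
  then show ?thesis using a b c by linarith
qed

lemma lbB:
  fixes s t js jt i pJS pJSc pI :: real
  assumes "s + t + 1 \<le> 2*i + js + jt" "i + jt \<le> t"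
    "pJSc < pI / 2" "pJS + pJSc \<ge> pI" "pJSc > 0" "jt \<ge> 0"
  shows "pJS * s + (pI - pJS) * t + pJS \<le> pJS * js + pJSc * jt + pI * i"
proof -
  have p: "pJS > pI / 2" using assms by linarith
  have a: "0 \<le> (pJSc - pI + pJS) * jt" using assms by simp
  have b: "0 \<le> pJS * (2*i+js+jt-s-t-1)" using assms p by simp
  have c: "0 \<le> (2*pJS - pI) * (t - i - jt)" using assms p by simp
  have "pJS * js + pJSc * jt + pI * i - (pJS * s + (pI - pJS) * t + pJS)
    = (pJSc - pI + pJS) * jt + pJS * (2*i+js+jt-s-t-1) + (2*pJS - pI) * (t - i - jt)"
    by (simp add: algebra_simps)
  then show ?thesis using a b c by linarith
qed

lemma min_exists:
  fixes w :: "'e set \<Rightarrow> real"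
  assumes "finite E" "\<And>C. P C \<Longrightarrow> C \<subseteq> E" "P C1"
  shows "\<exists>C0. P C0 \<and> (\<forall>C'. P C' \<longrightarrow> w C0 \<le> w C')"
proof -
  have f: "finite {C. P C}" using assms
    by (metis (no_types, lifting) Pow_iff finite_Pow_iff mem_Collect_eq rev_finite_subset subsetI)
  have "finite (w ` {C. P C})" "w ` {C. P C} \<noteq> {}" using f assms by auto
  then have "Min (w ` {C. P C}) \<in> w ` {C. P C}" by (rule Min_in)
  then obtain C0 where "P C0" "w C0 = Min (w ` {C. P C})" by auto
  moreover have "\<forall>C'. P C' \<longrightarrow> Min (w ` {C. P C}) \<le> w C'" using f by auto
  ultimately show ?thesis by auto
qed

theorem theorem6:
  fixes V :: "'v set" and E :: "'e set" and src tgt :: "'e \<Rightarrow> 'v" and S :: "'e set"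
    and pJS pJSc pI :: real and C J I :: "'e set"
  assumes "finite V" and "finite E"
    and "\<forall>e\<in>E. src e \<in> V \<and> tgt e \<in> V \<and> src e \<noteq> tgt e"
    and "S \<subseteq> E"
    and "0 < pJSc" and "pJSc \<le> pJS" and "pJS \<le> pI"
    and "pJSc < pI / 2" and "pJS + pJSc \<ge> pI"
    and "produced_attack V E src tgt S pJS pJSc pI C J I"
    and "\<forall>C' J' I'. produced_attack V E src tgt S pJS pJSc pI C' J' I' \<longrightarrow>
           attack_cost E S pJS pJSc pI J I \<le> attack_cost E S pJS pJSc pI J' I'"
  shows "optimal_detectable V E src tgt S pJS pJSc pI C J I"
proof -
  note fin = assms(2) and SE = assms(4)
  let ?cost = "attack_cost E S pJS pJSc pI"
  have validA: "gen_attack V E src tgt S C0 J0 I0 \<and> detectable C0 J0 I0 \<and>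
      ?cost J0 I0 = weightA E S pJSc pI C0 + pI - pJSc"
    if "attackA V E src tgt S pJSc pI C0 J0 I0" for C0 J0 I0
  proof -
    from that have cut: "is_cut V E src tgt C0" and lt: "real (card (C0 \<inter> S)) < real (card C0) / 2"
      and I0: "I0 \<subseteq> C0 \<inter> (E - S)" and cI: "card I0 = card (C0 \<inter> S) + 1"
      and J0: "J0 = (C0 \<inter> (E - S)) - I0"
      unfolding attackA_def feasA_def by auto
    have CE: "C0 \<subseteq> E" using cut cut_sub by blast
    have fC: "finite C0" using CE fin finite_subset by blast
    have c1: "card C0 = card (C0 \<inter> S) + card (C0 \<inter> (E - S))" using card_split[OF fin SE CE] .
    have fT: "finite (C0 \<inter> (E - S))" using fC by auto
    have cJ: "card J0 = card (C0 \<inter> (E - S)) - card I0" using J0 I0 fT card_Diff_subset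
      by (metis finite_subset)
    have JS: "J0 \<inter> S = {}" "J0 \<inter> (E - S) = J0" using J0 by auto
    have CJ: "C0 - J0 = (C0 \<inter> S) \<union> I0" using J0 I0 CE by auto
    have "card (C0 - J0) = card (C0 \<inter> S) + card I0" unfolding CJ
      using I0 fC fT by (subst card_Un_disjoint) (auto intro: finite_subset)
    hence det: "detectable C0 J0 I0" unfolding detectable_def using cI by simp
    have "I0 \<noteq> {}" using cI by auto
    hence ga: "gen_attack V E src tgt S C0 J0 I0" unfolding gen_attack_def using cut J0 I0 by auto
    have "card I0 \<le> card (C0 \<inter> (E - S))" using I0 fT card_mono by blast
    hence "real (card J0) = real (card (C0 \<inter> (E - S))) - real (card (C0 \<inter> S)) - 1"
      using cJ cI by simp
    hence e: "real (card (C0 \<inter> (E - S))) = real (card J0) + real (card (C0 \<inter> S)) + 1" by simp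
    have "?cost J0 I0 = pJSc * real (card J0) + pI * (real (card (C0 \<inter> S)) + 1)"
      unfolding attack_cost_def JS using cI by simp
    also have "\<dots> = weightA E S pJSc pI C0 + pI - pJSc"
      unfolding weightA_def e by (simp add: algebra_simps)
    finally have "?cost J0 I0 = weightA E S pJSc pI C0 + pI - pJSc" .
    thus ?thesis using ga det by blast
  qed
  have validB: "gen_attack V E src tgt S C0 J0 I0 \<and> detectable C0 J0 I0 \<and>
      ?cost J0 I0 = weightB E S pJS pI C0 + pJS"
    if "attackB V E src tgt S pJS pI C0 J0 I0" for C0 J0 I0
  proof -
    from that have cut: "is_cut V E src tgt C0" and ge: "real (card (C0 \<inter> S)) \<ge> real (card C0) / 2"
      and pos: "card (C0 \<inter> (E - S)) > 0"
      and I0: "I0 = C0 \<inter> (E - S)" and J0: "J0 \<subseteq> C0 \<inter> S"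
      and cJ: "card J0 = card (C0 \<inter> S) + 1 - card (C0 \<inter> (E - S))"
      unfolding attackB_def feasB_def by auto
    have CE: "C0 \<subseteq> E" using cut cut_sub by blast
    have fC: "finite C0" using CE fin finite_subset by blast
    have c1: "card C0 = card (C0 \<inter> S) + card (C0 \<inter> (E - S))" using card_split[OF fin SE CE] .
    have fS: "finite (C0 \<inter> S)" using fC by auto
    have JS: "J0 \<inter> S = J0" "J0 \<inter> (E - S) = {}" using J0 by auto
    have cCJ: "card (C0 - J0) = card C0 - card J0" using J0 fS
      by (meson card_Diff_subset finite_subset le_infE)
    have le: "card J0 \<le> card (C0 \<inter> S)" using J0 fS card_mono by blast
    have "card (C0 \<inter> S) \<ge> card (C0 \<inter> (E - S))" using ge c1 by linarith
    hence cJ': "real (card J0) = real (card (C0 \<inter> S)) + 1 - real (card (C0 \<inter> (E - S)))"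
      using cJ pos by (simp add: of_nat_diff)
    have det: "detectable C0 J0 I0" unfolding detectable_def using cCJ c1 cJ le pos I0 by simp
    have "I0 \<noteq> {}" using pos I0 by auto
    hence ga: "gen_attack V E src tgt S C0 J0 I0" unfolding gen_attack_def using cut J0 I0 by auto
    have "?cost J0 I0 = pJS * real (card J0) + pI * real (card (C0 \<inter> (E - S)))"
      unfolding attack_cost_def JS I0 by simp
    also have "\<dots> = weightB E S pJS pI C0 + pJS"
      unfolding weightB_def cJ' by (simp add: algebra_simps)
    finally have "?cost J0 I0 = weightB E S pJS pI C0 + pJS" .
    thus ?thesis using ga det by blast
  qed
  have main: "gen_attack V E src tgt S C J I \<and> detectable C J I"
    using assms(10) validA validB unfolding produced_attack_def by blast
  have opt: "?cost J I \<le> ?cost J' I'"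
    if ga': "gen_attack V E src tgt S C' J' I'" and det': "detectable C' J' I'" for C' J' I'
  proof -
    note F = attack_facts[OF fin SE ga' det']
    have cut': "is_cut V E src tgt C'" using ga' unfolding gen_attack_def by auto
    have CE': "C' \<subseteq> E" using cut' cut_sub by blast
    have c1: "card C' = card (C' \<inter> S) + card (C' \<inter> (E - S))" using card_split[OF fin SE CE'] .
    show ?thesis
    proof (cases "real (card (C' \<inter> S)) < real (card C') / 2")
      case True
      have fA: "feasA V E src tgt S C'" unfolding feasA_def using cut' True by auto
      obtain C0 where C0: "feasA V E src tgt S C0"
        "\<forall>C''. feasA V E src tgt S C'' \<longrightarrow> weightA E S pJSc pI C0 \<le> weightA E S pJSc pI C''"
        using min_exists[of E "feasA V E src tgt S" C' "weightA E S pJSc pI"] fin fA cut_sub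
        unfolding feasA_def by blast
      have cut0: "is_cut V E src tgt C0" and lt0: "real (card (C0 \<inter> S)) < real (card C0) / 2"
        using C0 unfolding feasA_def by auto
      have CE0: "C0 \<subseteq> E" using cut0 cut_sub by blast
      have "card C0 = card (C0 \<inter> S) + card (C0 \<inter> (E - S))" using card_split[OF fin SE CE0] .
      hence "card (C0 \<inter> S) + 1 \<le> card (C0 \<inter> (E - S))" using lt0 by linarith
      then obtain I0 where I0: "I0 \<subseteq> C0 \<inter> (E - S)" "card I0 = card (C0 \<inter> S) + 1"
        by (meson obtain_subset_with_card_n)
      define J0 where "J0 = (C0 \<inter> (E - S)) - I0"
      have aA: "attackA V E src tgt S pJSc pI C0 J0 I0"
        unfolding attackA_def J0_def using C0 I0 by auto
      hence "produced_attack V E src tgt S pJS pJSc pI C0 J0 I0" unfolding produced_attack_def by auto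
      hence "?cost J I \<le> ?cost J0 I0" using assms(11) by blast
      also have "\<dots> = weightA E S pJSc pI C0 + pI - pJSc" using validA[OF aA] by auto
      also have "\<dots> \<le> weightA E S pJSc pI C' + pI - pJSc" using C0 fA by auto
      also have "\<dots> \<le> ?cost J' I'"
        unfolding weightA_def attack_cost_def
        using lbA[OF F(1) F(2) _ assms(8) assms(9) assms(5)] by simp
      finally show ?thesis .
    next
      case False
      have fB: "feasB V E src tgt S C'" unfolding feasB_def using cut' False F(3) by auto
      obtain C0 where C0: "feasB V E src tgt S C0"
        "\<forall>C''. feasB V E src tgt S C'' \<longrightarrow> weightB E S pJS pI C0 \<le> weightB E S pJS pI C''"
        using min_exists[of E "feasB V E src tgt S" C' "weightB E S pJS pI"] fin fB cut_sub
        unfolding feasB_def by blast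
      have pos0: "card (C0 \<inter> (E - S)) > 0" using C0 unfolding feasB_def by auto
      have "card (C0 \<inter> S) + 1 - card (C0 \<inter> (E - S)) \<le> card (C0 \<inter> S)" using pos0 by linarith
      then obtain J0 where J0: "J0 \<subseteq> C0 \<inter> S" "card J0 = card (C0 \<inter> S) + 1 - card (C0 \<inter> (E - S))"
        by (meson obtain_subset_with_card_n)
      define I0 where "I0 = C0 \<inter> (E - S)"
      have aB: "attackB V E src tgt S pJS pI C0 J0 I0"
        unfolding attackB_def I0_def using C0 J0 by auto
      hence "produced_attack V E src tgt S pJS pJSc pI C0 J0 I0" unfolding produced_attack_def by auto
      hence "?cost J I \<le> ?cost J0 I0" using assms(11) by blast
      also have "\<dots> = weightB E S pJS pI C0 + pJS" using validB[OF aB] by auto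
      also have "\<dots> \<le> weightB E S pJS pI C' + pJS" using C0 fB by auto
      also have "\<dots> \<le> ?cost J' I'"
        unfolding weightB_def attack_cost_def
        using lbB[OF F(1) F(2) assms(8) assms(9) assms(5)] by simp
      finally show ?thesis .
    qed
  qed
  show ?thesis unfolding optimal_detectable_def using main opt by blast
qed

end
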